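(* Let $0<\eta\le\gamma$ and let $c$ satisfy \[ 0\le c\le\frac{\sqrt{2|2\eta-\gamma|+\gamma^2+1}-|2\eta-\gamma|-1}{4\eta^2}. \] Then for all $x\in[-1,1]$ and $\epsilon\in[-1,1]$, \[ e^{c\eta^2x^2-\eta x}-\frac{e^{-\gamma(x+\epsilon)}-1}{\gamma}\,\eta\,(1+2c\eta\epsilon)\,e^{c\eta^2\epsilon^2+\eta\epsilon}\;\le\;e^{c\eta^2\epsilon^2+\eta\epsilon}. \] *)

theory Defs
  imports Complex_Main
begin

end

theory Submission
  imports Defs
begin

theorem mainTheorem11:
  fixes \<eta> \<gamma> c x \<epsilon> :: real
  assumes "0 < \<eta>" and "\<eta> \<le> \<gamma>"
    and "0 \<le> c"
    and "c \<le> (sqrt (2 * \<bar>2 * \<eta> - \<gamma>\<bar> + \<gamma>^2 + 1) - \<bar>2 * \<eta> - \<gamma>\<bar> - 1) / (4 * \<eta>^2)"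
    and "-1 \<le> x" and "x \<le> 1"
    and "-1 \<le> \<epsilon>" and "\<epsilon> \<le> 1"
  shows "exp (c * \<eta>^2 * x^2 - \<eta> * x)
           - (exp (- \<gamma> * (x + \<epsilon>)) - 1) / \<gamma> * \<eta> * (1 + 2 * c * \<eta> * \<epsilon>)
               * exp (c * \<eta>^2 * \<epsilon>^2 + \<eta> * \<epsilon>)
         \<le> exp (c * \<eta>^2 * \<epsilon>^2 + \<eta> * \<epsilon>)"
proof -
  note h = assms
  define d where "d = \<bar>2 * \<eta> - \<gamma>\<bar>"
  define t where "t = 2 * c * \<eta>^2"
  define k where "k = \<eta> + t * \<epsilon>"
  define s where "s = sqrt (2 * d + \<gamma>^2 + 1)"
  have gpos: "\<gamma> > 0" using h by linarith
  have t0: "t \<ge> 0" using h unfolding t_def by simp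
  have d0: "d \<ge> 0" unfolding d_def by simp
  have e2: "4 * \<eta>^2 > 0" using h by simp
  have "c * (4 * \<eta>^2) \<le> s - d - 1"
    using h(4) e2 unfolding s_def d_def by (simp add: pos_le_divide_eq)
  hence t2: "2 * t + d + 1 \<le> s" unfolding t_def by (simp add: algebra_simps)
  have "(2 * t + d + 1)^2 \<le> s^2"
    using t2 t0 d0 by (intro power_mono) auto
  also have "s^2 = 2 * d + \<gamma>^2 + 1" unfolding s_def
    using d0 by (simp add: add_nonneg_nonneg)
  finally have sq: "(2 * t + d + 1)^2 \<le> 2 * d + \<gamma>^2 + 1" .
  have dsq: "d^2 = (2*\<eta> - \<gamma>)^2" unfolding d_def by simp
  have main: "t^2 + t * (d + 1) \<le> \<eta> * (\<gamma> - \<eta>)"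
    using sq dsq by (simp add: power2_eq_square algebra_simps)
  have dge1: "d \<ge> 2*\<eta> - \<gamma>" "d \<ge> \<gamma> - 2*\<eta>" unfolding d_def by auto
  define Q where "Q u = t + (t * u - k) * (\<gamma> - k + t * u)" for u
  have Qb: "Q (\<epsilon> + 1) \<le> 0"
  proof -
    have "Q (\<epsilon> + 1) = t^2 + t * (\<gamma> - 2*\<eta> + 1) - \<eta> * (\<gamma> - \<eta>)"
      unfolding Q_def k_def by (simp add: power2_eq_square algebra_simps)
    also have "t * (\<gamma> - 2*\<eta> + 1) \<le> t * (d + 1)"
      using t0 dge1 by (intro mult_left_mono) auto
    hence "t^2 + t * (\<gamma> - 2*\<eta> + 1) - \<eta> * (\<gamma> - \<eta>) \<le> 0" using main by linarith
    finally show ?thesis .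
  qed
  have Qa: "Q (\<epsilon> - 1) \<le> 0"
  proof -
    have "Q (\<epsilon> - 1) = t^2 + t * (2*\<eta> - \<gamma> + 1) - \<eta> * (\<gamma> - \<eta>)"
      unfolding Q_def k_def by (simp add: power2_eq_square algebra_simps)
    also have "t * (2*\<eta> - \<gamma> + 1) \<le> t * (d + 1)"
      using t0 dge1 by (intro mult_left_mono) auto
    hence "t^2 + t * (2*\<eta> - \<gamma> + 1) - \<eta> * (\<gamma> - \<eta>) \<le> 0" using main by linarith
    finally show ?thesis .
  qed
  have Qle: "Q u \<le> 0" if "\<epsilon> - 1 \<le> u" "u \<le> \<epsilon> + 1" for u
  proof -
    have id: "2 * Q u = ((\<epsilon> + 1) - u) * Q (\<epsilon> - 1) + (u - (\<epsilon> - 1)) * Q (\<epsilon> + 1)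
               + 2 * t^2 * ((u - (\<epsilon> - 1)) * (u - (\<epsilon> + 1)))"
      unfolding Q_def by (simp add: power2_eq_square algebra_simps)
    have "((\<epsilon> + 1) - u) * Q (\<epsilon> - 1) \<le> 0"
      using Qa that by (intro mult_nonneg_nonpos) auto
    moreover have "(u - (\<epsilon> - 1)) * Q (\<epsilon> + 1) \<le> 0"
      using Qb that by (intro mult_nonneg_nonpos) auto
    moreover have "(u - (\<epsilon> - 1)) * (u - (\<epsilon> + 1)) \<le> 0"
      using that by (intro mult_nonneg_nonpos) auto
    hence "2 * t^2 * ((u - (\<epsilon> - 1)) * (u - (\<epsilon> + 1))) \<le> 0"
      by (rule mult_nonneg_nonpos[rotated]) simp
    ultimately show ?thesis using id by linarith
  qed
  define E where "E u = exp ((\<gamma> - k) * u + c * \<eta>^2 * u^2)" for u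
  define \<phi> where "\<phi> u = (t * u - k) * E u + k" for u
  have \<phi>d: "(\<phi> has_real_derivative E u * Q u) (at u)" for u
  proof -
    have "(\<phi> has_real_derivative t * E u + (t * u - k) * (E u * ((\<gamma> - k) + c * \<eta>^2 * (2 * u)))) (at u)"
      unfolding \<phi>_def[abs_def] E_def[abs_def]
      by (auto intro!: derivative_eq_intros)
    moreover have "t * E u + (t * u - k) * (E u * ((\<gamma> - k) + c * \<eta>^2 * (2 * u))) = E u * Q u"
      unfolding Q_def t_def by (simp add: algebra_simps)
    ultimately show ?thesis by simp
  qed
  have \<phi>mono: "\<phi> b \<le> \<phi> a" if "\<epsilon> - 1 \<le> a" "a \<le> b" "b \<le> \<epsilon> + 1" for a b
  proof -
    have "\<phi> b \<le> \<phi> a"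
      apply (rule DERIV_nonpos_imp_nonincreasing[OF that(2)])
      subgoal for y using \<phi>d[of y] Qle[of y] that
        by (intro exI[of _ "E y * Q y"]) (auto simp: E_def intro: mult_nonneg_nonpos)
      done
    thus ?thesis .
  qed
  have \<phi>0: "\<phi> 0 = 0" unfolding \<phi>_def E_def by simp
  define G where "G u = exp (c * \<eta>^2 * u^2 - k * u) + k * (1 - exp (- \<gamma> * u)) / \<gamma>" for u
  have Gd: "(G has_real_derivative exp (- \<gamma> * u) * \<phi> u) (at u)" for u
  proof -
    have "(G has_real_derivative exp (c * \<eta>^2 * u^2 - k * u) * (c * \<eta>^2 * (2 * u) - k)
            + k * (exp (- \<gamma> * u) * \<gamma>) / \<gamma>) (at u)"
      unfolding G_def[abs_def]
      by (auto intro!: derivative_eq_intros)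
    moreover have "exp (c * \<eta>^2 * u^2 - k * u) = exp (- \<gamma> * u) * E u"
      unfolding E_def by (simp add: exp_add[symmetric] algebra_simps)
    ultimately show ?thesis using gpos
      unfolding \<phi>_def t_def by (simp add: algebra_simps)
  qed
  have G0: "G 0 = 1" unfolding G_def by simp
  have Gle: "G u \<le> 1" if "\<epsilon> - 1 \<le> u" "u \<le> \<epsilon> + 1" for u
  proof (cases "u \<le> 0")
    case True
    have "G u \<le> G 0"
      apply (rule DERIV_nonneg_imp_nondecreasing[OF True])
      subgoal for y using Gd[of y] \<phi>mono[of y 0] \<phi>0 that True h(7,8)
        by (intro exI[of _ "exp (- \<gamma> * y) * \<phi> y"]) auto
      done
    thus ?thesis using G0 by simp
  next
    case False
    have "G u \<le> G 0"
      apply (rule DERIV_nonpos_imp_nonincreasing[of 0 u])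
      using False apply simp
      subgoal for y using Gd[of y] \<phi>mono[of 0 y] \<phi>0 that False h(7,8)
        by (intro exI[of _ "exp (- \<gamma> * y) * \<phi> y"]) (auto intro: mult_nonneg_nonpos)
      done
    thus ?thesis using G0 by simp
  qed
  have Gx: "G (x + \<epsilon>) \<le> 1" using Gle h(5,6) by simp
  define F where "F = exp (c * \<eta>^2 * \<epsilon>^2 + \<eta> * \<epsilon>)"
  have Fp: "F > 0" unfolding F_def by simp
  have e1: "exp (c * \<eta>^2 * x^2 - \<eta> * x) = exp (c * \<eta>^2 * (x + \<epsilon>)^2 - k * (x + \<epsilon>)) * F"
    unfolding F_def k_def t_def by (simp add: exp_add[symmetric] power2_eq_square algebra_simps)
  have kk: "\<eta> * (1 + 2 * c * \<eta> * \<epsilon>) = k" unfolding k_def t_def by (simp add: power2_eq_square algebra_simps)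
  have "exp (c * \<eta>^2 * x^2 - \<eta> * x)
           - (exp (- \<gamma> * (x + \<epsilon>)) - 1) / \<gamma> * \<eta> * (1 + 2 * c * \<eta> * \<epsilon>) * F
        = G (x + \<epsilon>) * F"
    unfolding e1 G_def using kk[symmetric] by (simp add: algebra_simps diff_divide_distrib add_divide_distrib)
  also have "\<dots> \<le> 1 * F" using Gx Fp by (intro mult_right_mono) auto
  finally show ?thesis unfolding F_def by simp
qed

end
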